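(* Let $V$ be a real vector space of dimension $m\ge3$ with a positive definite inner product, and let $R\neq0$ be a Jacobi-Tsankov algebraic curvature tensor on $V$ such that $r(x)<m-1$ for all $x\in V$. Then: \begin{enumerate} \item $r(x)=1$ for every $x\in S(V)$; \item $R$ is Osserman. \end{enumerate}
   Context: An algebraic curvature tensor is $R\in\otimes^4V^*$ satisfying $R(x,y,z,w)=R(z,w,x,y)=-R(y,x,z,w)$ and $R(x,y,z,w)+R(y,z,x,w)+R(z,x,y,w)=0$. The curvature operator $\mathcal{R}(x,y)$ is defined by $\langle\mathcal{R}(x,y)z,w\rangle=R(x,y,z,w)$; the Jacobi operator is $J(x):y\mapsto\mathcal{R}(y,x)x$, and $r(x)=\operatorname{Rank}J(x)$. $S(V)=\{\xi\in V:\langle\xi,\xi\rangle=1\}$. $R$ is Jacobi-Tsankov if $x\perp y$ implies $J(x)J(y)=J(y)J(x)$. $R$ is Osserman if the eigenvalues of $J(x)$ are constant for $x\in S(V)$. *)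

theory Defs
  imports "HOL-Analysis.Analysis"
begin

text \<open>An element of the fourfold tensor product of the dual of V: a real-valued
  function of four vectors, linear in each argument.\<close>
definition multilinear4 :: "('a::real_vector \<Rightarrow> 'a \<Rightarrow> 'a \<Rightarrow> 'a \<Rightarrow> real) \<Rightarrow> bool" where
  "multilinear4 R \<longleftrightarrow>
     (\<forall>y z w. linear (\<lambda>x. R x y z w)) \<and> (\<forall>x z w. linear (\<lambda>y. R x y z w)) \<and>
     (\<forall>x y w. linear (\<lambda>z. R x y z w)) \<and> (\<forall>x y z. linear (\<lambda>w. R x y z w))"

definition alg_curv_tensor :: "('a::real_vector \<Rightarrow> 'a \<Rightarrow> 'a \<Rightarrow> 'a \<Rightarrow> real) \<Rightarrow> bool" where
  "alg_curv_tensor R \<longleftrightarrow> multilinear4 R \<and>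
     (\<forall>x y z w. R x y z w = R z w x y) \<and>
     (\<forall>x y z w. R x y z w = - R y x z w) \<and>
     (\<forall>x y z w. R x y z w + R y z x w + R z x y w = 0)"

text \<open>Curvature operator: the unique vector with inner product R x y z w against w.\<close>
definition curv_op :: "('a::euclidean_space \<Rightarrow> 'a \<Rightarrow> 'a \<Rightarrow> 'a \<Rightarrow> real) \<Rightarrow> 'a \<Rightarrow> 'a \<Rightarrow> 'a \<Rightarrow> 'a" where
  "curv_op R x y z = (\<Sum>b\<in>Basis. R x y z b *\<^sub>R b)"

definition jacobi_op :: "('a::euclidean_space \<Rightarrow> 'a \<Rightarrow> 'a \<Rightarrow> 'a \<Rightarrow> real) \<Rightarrow> 'a \<Rightarrow> 'a \<Rightarrow> 'a" where
  "jacobi_op R x = (\<lambda>y. curv_op R y x x)"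

definition jacobi_rank :: "('a::euclidean_space \<Rightarrow> 'a \<Rightarrow> 'a \<Rightarrow> 'a \<Rightarrow> real) \<Rightarrow> 'a \<Rightarrow> nat" where
  "jacobi_rank R x = dim (range (jacobi_op R x))"

definition unit_sphere :: "'a::euclidean_space set" where
  "unit_sphere = {\<xi>. \<xi> \<bullet> \<xi> = 1}"

definition jacobi_tsankov :: "('a::euclidean_space \<Rightarrow> 'a \<Rightarrow> 'a \<Rightarrow> 'a \<Rightarrow> real) \<Rightarrow> bool" where
  "jacobi_tsankov R \<longleftrightarrow>
     (\<forall>x y. x \<bullet> y = 0 \<longrightarrow> jacobi_op R x \<circ> jacobi_op R y = jacobi_op R y \<circ> jacobi_op R x)"

text \<open>Osserman: the eigenvalues of J(x), counted with multiplicity, are the same for all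
  unit vectors x (J(x) is self-adjoint, so multiplicity = dimension of the eigenspace).\<close>
definition osserman :: "('a::euclidean_space \<Rightarrow> 'a \<Rightarrow> 'a \<Rightarrow> 'a \<Rightarrow> real) \<Rightarrow> bool" where
  "osserman R \<longleftrightarrow>
     (\<forall>x\<in>unit_sphere. \<forall>y\<in>unit_sphere. \<forall>c::real.
        dim {v. jacobi_op R x v = c *\<^sub>R v} = dim {v. jacobi_op R y v = c *\<^sub>R v})"

end

theory Submission
  imports Defs
begin

lemma inner_ext: "(\<And>w. (a::'a::real_inner) \<bullet> w = b \<bullet> w) \<Longrightarrow> a = b"
  using vector_eq_rdot by blast

lemma orth_sum_diff_aux: fixes x y :: "'a::real_inner" shows "(x + y) \<bullet> (x - y) = x \<bullet> x - x \<bullet> y + y \<bullet> x - y \<bullet> y"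
    by (simp add: inner_add_left inner_diff_right)
lemma orth_sum_diff: fixes x y :: "'a::real_inner" assumes "x \<bullet> y = 0" "x \<bullet> x = y \<bullet> y" shows "(x + y) \<bullet> (x - y) = 0"
  using orth_sum_diff_aux[of x y] inner_commute[of y x] assms by linarith

locale jt =
  fixes R :: "'a::euclidean_space \<Rightarrow> 'a \<Rightarrow> 'a \<Rightarrow> 'a \<Rightarrow> real"
  assumes act: "alg_curv_tensor R" and jts: "jacobi_tsankov R"
begin

abbreviation J where "J \<equiv> jacobi_op R"

definition Jp :: "'a \<Rightarrow> 'a \<Rightarrow> 'a \<Rightarrow> 'a" where
  "Jp a b v = curv_op R v a b + curv_op R v b a"

lemma ml: "multilinear4 R"
  using act unfolding alg_curv_tensor_def by (elim conjE)

lemma lin1: "linear (\<lambda>x. R x y z w)"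
  using ml unfolding multilinear4_def by (elim conjE allE)
lemma lin2: "linear (\<lambda>y. R x y z w)"
  using ml unfolding multilinear4_def by (elim conjE allE)
lemma lin3: "linear (\<lambda>z. R x y z w)"
  using ml unfolding multilinear4_def by (elim conjE allE)
lemma lin4: "linear (\<lambda>w. R x y z w)"
  using ml unfolding multilinear4_def by (elim conjE allE)

lemma R_add1: "R (a + b) y z w = R a y z w + R b y z w" by (simp add: linear_add[OF lin1])
lemma R_add2: "R x (a + b) z w = R x a z w + R x b z w" by (simp add: linear_add[OF lin2])
lemma R_add3: "R x y (a + b) w = R x y a w + R x y b w" by (simp add: linear_add[OF lin3])
lemma R_add4: "R x y z (a + b) = R x y z a + R x y z b" by (simp add: linear_add[OF lin4])
lemma R_diff1: "R (a - b) y z w = R a y z w - R b y z w" by (simp add: linear_diff[OF lin1])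
lemma R_diff2: "R x (a - b) z w = R x a z w - R x b z w" by (simp add: linear_diff[OF lin2])
lemma R_diff3: "R x y (a - b) w = R x y a w - R x y b w" by (simp add: linear_diff[OF lin3])
lemma R_diff4: "R x y z (a - b) = R x y z a - R x y z b" by (simp add: linear_diff[OF lin4])
lemma R_scale1: "R (c *\<^sub>R a) y z w = c * R a y z w" by (simp add: linear_scale[OF lin1])
lemma R_scale2: "R x (c *\<^sub>R a) z w = c * R x a z w" by (simp add: linear_scale[OF lin2])
lemma R_scale3: "R x y (c *\<^sub>R a) w = c * R x y a w" by (simp add: linear_scale[OF lin3])
lemma R_scale4: "R x y z (c *\<^sub>R a) = c * R x y z a" by (simp add: linear_scale[OF lin4])
lemma R_neg1: "R (- a) y z w = - R a y z w" by (simp add: linear_neg[OF lin1])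
lemma R_neg2: "R x (- a) z w = - R x a z w" by (simp add: linear_neg[OF lin2])
lemma R_neg3: "R x y (- a) w = - R x y a w" by (simp add: linear_neg[OF lin3])
lemma R_neg4: "R x y z (- a) = - R x y z a" by (simp add: linear_neg[OF lin4])
lemma R_zero1: "R 0 y z w = 0" by (simp add: linear_0[OF lin1])
lemma R_zero2: "R x 0 z w = 0" by (simp add: linear_0[OF lin2])
lemma R_zero3: "R x y 0 w = 0" by (simp add: linear_0[OF lin3])
lemma R_zero4: "R x y z 0 = 0" by (simp add: linear_0[OF lin4])

lemmas R_lin[simp] = R_add1 R_add2 R_add3 R_add4 R_diff1 R_diff2 R_diff3 R_diff4
  R_scale1 R_scale2 R_scale3 R_scale4 R_neg1 R_neg2 R_neg3 R_neg4 R_zero1 R_zero2 R_zero3 R_zero4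

lemma R_pair: "R x y z w = R z w x y" using act unfolding alg_curv_tensor_def by blast
lemma R_anti1: "R x y z w = - R y x z w" using act unfolding alg_curv_tensor_def by blast
lemma R_anti2: "R x y z w = - R x y w z"
proof -
  have "R x y z w = R z w x y" by (rule R_pair)
  also have "\<dots> = - R w z x y" by (rule R_anti1)
  also have "R w z x y = R x y w z" by (rule R_pair)
  finally show ?thesis .
qed
lemma R_bianchi: "R x y z w + R y z x w + R z x y w = 0" using act unfolding alg_curv_tensor_def by blast
lemma R_xx1 [simp]: "R x x z w = 0" using R_anti1[of x x z w] by linarith
lemma R_xx2 [simp]: "R x y z z = 0" using R_anti2[of x y z z] by linarith

lemma curv_inner [simp]: "curv_op R x y z \<bullet> w = R x y z w"
proof -
  have "curv_op R x y z \<bullet> w = (\<Sum>b\<in>Basis. R x y z b * (b \<bullet> w))"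
    unfolding curv_op_def by (simp add: inner_sum_left)
  also have "\<dots> = (\<Sum>b\<in>Basis. R x y z ((w \<bullet> b) *\<^sub>R b))" by (simp add: inner_commute mult.commute)
  also have "\<dots> = R x y z (\<Sum>b\<in>Basis. (w \<bullet> b) *\<^sub>R b)"
    using linear_sum[OF lin4[of x y z], where g="\<lambda>b. (w \<bullet> b) *\<^sub>R b" and S=Basis] by (simp add: linear_scale[OF lin4])
  also have "\<dots> = R x y z w" by (simp add: euclidean_representation)
  finally show ?thesis .
qed

lemma J_inner [simp]: "J x v \<bullet> w = R v x x w"
  unfolding jacobi_op_def by simp

lemma Jp_inner [simp]: "Jp a b v \<bullet> w = R v a b w + R v b a w"
  unfolding Jp_def by (simp add: inner_add_left)

lemma J_add [simp]: "J x (a + b) = J x a + J x b"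
  by (rule inner_ext) (simp add: inner_add_left)
lemma J_diff [simp]: "J x (a - b) = J x a - J x b"
  by (rule inner_ext) (simp add: inner_diff_left)
lemma J_scale [simp]: "J x (c *\<^sub>R a) = c *\<^sub>R J x a"
  by (rule inner_ext) simp
lemma J_neg [simp]: "J x (- a) = - J x a"
  by (rule inner_ext) simp
lemma J_zero [simp]: "J x 0 = 0"
  by (rule inner_ext) simp
lemma Jp_add [simp]: "Jp x y (a + b) = Jp x y a + Jp x y b"
  by (rule inner_ext) (simp add: inner_add_left)
lemma Jp_diff [simp]: "Jp x y (a - b) = Jp x y a - Jp x y b"
  by (rule inner_ext) (simp add: inner_diff_left)
lemma Jp_scale [simp]: "Jp x y (c *\<^sub>R a) = c *\<^sub>R Jp x y a"
  by (rule inner_ext) (simp add: algebra_simps)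
lemma Jp_neg [simp]: "Jp x y (- a) = - Jp x y a"
  by (rule inner_ext) simp
lemma Jp_zero [simp]: "Jp x y 0 = 0"
  by (rule inner_ext) simp

lemma J_linear: "linear (J x)"
  by (rule linearI) simp_all
lemma Jp_linear: "linear (Jp x y)"
  by (rule linearI) simp_all

lemma R_sym1: "R a x x b = R b x x a"
proof -
  have "R a x x b = R x b a x" by (rule R_pair)
  moreover have "R x b a x = - R b x a x" by (rule R_anti1)
  moreover have "R b x a x = - R b x x a" by (rule R_anti2)
  ultimately show ?thesis by linarith
qed

lemma R_sym2: "R a x y b = R b y x a"
proof -
  have "R a x y b = R y b a x" by (rule R_pair)
  moreover have "R y b a x = - R b y a x" by (rule R_anti1)
  moreover have "R b y a x = - R b y x a" by (rule R_anti2)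
  ultimately show ?thesis by linarith
qed

lemma J_sym: "J x a \<bullet> b = a \<bullet> J x b"
proof -
  have "J x a \<bullet> b = R a x x b" by simp
  moreover have "a \<bullet> J x b = J x b \<bullet> a" by (rule inner_commute)
  moreover have "J x b \<bullet> a = R b x x a" by simp
  ultimately show ?thesis using R_sym1[of a x b] by simp
qed

lemma Jp_sym: "Jp x y a \<bullet> b = a \<bullet> Jp x y b"
proof -
  have "Jp x y a \<bullet> b = R a x y b + R a y x b" by simp
  moreover have "a \<bullet> Jp x y b = Jp x y b \<bullet> a" by (rule inner_commute)
  moreover have "Jp x y b \<bullet> a = R b x y a + R b y x a" by simp
  ultimately show ?thesis using R_sym2[of a x y b] R_sym2[of a y x b] by simp
qed

lemma J_self [simp]: "J x x = 0"
  by (rule inner_ext) simp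
lemma J_perp [simp]: "J x v \<bullet> x = 0"
  by simp
lemma J_perp' [simp]: "x \<bullet> J x v = 0"
  using J_perp[of x v] inner_commute[of x "J x v"] by simp

lemma K_sym: "J x w \<bullet> w = J w x \<bullet> x"
  by (simp add: R_pair[of w x x w])

lemma Jp_self1: "Jp x y x = - J x y"
  by (rule inner_ext) (simp add: R_anti1[of x y x])
lemma Jp_self2: "Jp x y y = - J y x"
  by (rule inner_ext) (simp add: R_anti1[of y x y])
lemma Jp_commute: "Jp a b = Jp b a"
  by (rule ext, rule inner_ext) simp

lemma J_sumx: "J (a + b) v = J a v + Jp a b v + J b v"
  by (rule inner_ext) (simp add: inner_add_left)
lemma J_diffx: "J (a - b) v = J a v - Jp a b v + J b v"
  by (rule inner_ext) (simp add: inner_add_left inner_diff_left)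
lemma J_scalex: "J (c *\<^sub>R a) v = (c * c) *\<^sub>R J a v"
  by (rule inner_ext) simp

lemma jt_comm: assumes "x \<bullet> y = 0" shows "J x (J y v) = J y (J x v)"
proof -
  have "J x \<circ> J y = J y \<circ> J x" using jts[unfolded jacobi_tsankov_def, rule_format, OF assms] .
  from fun_cong[OF this, of v] show ?thesis by simp
qed

lemma Jp_alt: "Jp a b t = (1/2) *\<^sub>R (J (a + b) t - J (a - b) t)"
proof -
  have "J (a + b) t - J (a - b) t = 2 *\<^sub>R Jp a b t"
    unfolding J_sumx J_diffx by (simp add: scaleR_2)
  then show ?thesis by simp
qed

lemma Jp_comm:
  assumes "x \<bullet> a = 0" "x \<bullet> b = 0"
  shows "J x (Jp a b v) = Jp a b (J x v)"
proof -
  have 1: "x \<bullet> (a + b) = 0" "x \<bullet> (a - b) = 0" using assms by (simp_all add: inner_add_right inner_diff_right)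
  have "J x (Jp a b v) = (1/2) *\<^sub>R (J x (J (a + b) v) - J x (J (a - b) v))"
    unfolding Jp_alt[of a b v] by simp
  also have "\<dots> = (1/2) *\<^sub>R (J (a + b) (J x v) - J (a - b) (J x v))"
    using jt_comm[OF 1(1)] jt_comm[OF 1(2)] by simp
  also have "\<dots> = Jp a b (J x v)" unfolding Jp_alt[of a b "J x v"] ..
  finally show ?thesis .
qed

lemma rot:
  assumes "x \<bullet> y = 0" "x \<bullet> x = y \<bullet> y"
  shows "Jp x y (J x v + J y v) = J x (Jp x y v) + J y (Jp x y v)"
proof -
  have o: "(x + y) \<bullet> (x - y) = 0" using orth_sum_diff[OF assms] .
  have e: "J (x + y) (J (x - y) v) = J (x - y) (J (x + y) v)" using jt_comm[OF o] .
  have l: "J (x + y) (J (x - y) v) = J x (J x v) - J x (Jp x y v) + J x (J y v) + (Jp x y (J x v) - Jp x y (Jp x y v) + Jp x y (J y v)) + (J y (J x v) - J y (Jp x y v) + J y (J y v))" (is "_ = ?L")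
    unfolding J_sumx J_diffx by simp
  have r: "J (x - y) (J (x + y) v) = J x (J x v) + J x (Jp x y v) + J x (J y v) - (Jp x y (J x v) + Jp x y (Jp x y v) + Jp x y (J y v)) + (J y (J x v) + J y (Jp x y v) + J y (J y v))"
    (is "_ = ?R")
    unfolding J_sumx J_diffx by simp
  show ?thesis
  proof (rule inner_ext)
    fix w
    have "?L = J (x + y) (J (x - y) v)" using l by (rule sym)
    also have "\<dots> = J (x - y) (J (x + y) v)" by (rule e)
    also have "\<dots> = ?R" by (rule r)
    finally have eq: "?L = ?R" .
    have "?L \<bullet> w = ?R \<bullet> w" using eq by (rule arg_cong)
    then have "J x (J x v) \<bullet> w - J x (Jp x y v) \<bullet> w + J x (J y v) \<bullet> w + (Jp x y (J x v) \<bullet> w - Jp x y (Jp x y v) \<bullet> w + Jp x y (J y v) \<bullet> w) + (J y (J x v) \<bullet> w - J y (Jp x y v) \<bullet> w + J y (J y v) \<bullet> w)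
      = J x (J x v) \<bullet> w + J x (Jp x y v) \<bullet> w + J x (J y v) \<bullet> w - (Jp x y (J x v) \<bullet> w + Jp x y (Jp x y v) \<bullet> w + Jp x y (J y v) \<bullet> w) + (J y (J x v) \<bullet> w + J y (Jp x y v) \<bullet> w + J y (J y v) \<bullet> w)"
      by (simp only: inner_add_left inner_diff_left)
    then have "Jp x y (J x v) \<bullet> w + Jp x y (J y v) \<bullet> w = J x (Jp x y v) \<bullet> w + J y (Jp x y v) \<bullet> w"
      by linarith
    then show "Jp x y (J x v + J y v) \<bullet> w = (J x (Jp x y v) + J y (Jp x y v)) \<bullet> w"
      by (simp only: Jp_add inner_add_left)
  qed
qed


declare J_inner [simp del] Jp_inner [simp del] curv_inner [simp del]

lemma N_eq:
  assumes o: "x \<bullet> w = 0" and n: "x \<bullet> x = w \<bullet> w"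
  shows "J w x \<bullet> J w x = J x w \<bullet> J x w"
proof -
  have h: "Jp x w (J w x) = - J x (J x w) - J w (J x w)"
    using rot[OF o n, of x] by (simp add: Jp_self1)
  have 1: "Jp x w (J w x) \<bullet> w = - (J w x \<bullet> J w x)"
    by (simp add: Jp_sym Jp_self2)
  have 2: "(- J x (J x w) - J w (J x w)) \<bullet> w = - (J x w \<bullet> J x w)"
    by (simp add: inner_diff_left J_sym)
  from h 1 2 show ?thesis by simp
qed

lemma J0x [simp]: "J 0 v = 0"
  by (rule inner_ext) (simp add: J_inner)

lemma N_gen:
  assumes o: "x \<bullet> w = 0"
  shows "(x \<bullet> x) * (J w x \<bullet> J w x) = (w \<bullet> w) * (J x w \<bullet> J x w)"
proof (cases "w = 0")
  case True
  then show ?thesis by simp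
next
  case wnz: False
  show ?thesis
  proof (cases "x = 0")
    case True
    then show ?thesis by simp
  next
    case False
    have wn: "w \<bullet> w > 0" using wnz by simp
    have xn: "x \<bullet> x > 0" using False by simp
    define q where "q = (x \<bullet> x) / (w \<bullet> w)"
    have qpos: "q > 0" unfolding q_def using wn xn by simp
    define c where "c = sqrt q"
    have c2: "c * c = q" unfolding c_def using qpos by simp
    have cpos: "c > 0" unfolding c_def using qpos by simp
    have qw: "q * (w \<bullet> w) = x \<bullet> x" unfolding q_def using wn by simp
    have o': "x \<bullet> (c *\<^sub>R w) = 0" using o by simp
    have "(c *\<^sub>R w) \<bullet> (c *\<^sub>R w) = (c * c) * (w \<bullet> w)" by simp
    then have n': "x \<bullet> x = (c *\<^sub>R w) \<bullet> (c *\<^sub>R w)" using c2 qw by simp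
    have "J (c *\<^sub>R w) x \<bullet> J (c *\<^sub>R w) x = J x (c *\<^sub>R w) \<bullet> J x (c *\<^sub>R w)"
      by (rule N_eq[OF o' n'])
    then have "((c*c) * (c*c)) * (J w x \<bullet> J w x) = (c * c) * (J x w \<bullet> J x w)"
      by (simp add: J_scalex)
    then have "(c*c) * ((c*c) * (J w x \<bullet> J w x)) = (c * c) * (J x w \<bullet> J x w)"
      by (simp only: mult.assoc)
    then have "(c*c) * (J w x \<bullet> J w x) = (J x w \<bullet> J x w)" using cpos by simp
    then have "q * (J w x \<bullet> J w x) = (J x w \<bullet> J x w)" using c2 by simp
    then have "(w \<bullet> w) * (q * (J w x \<bullet> J w x)) = (w \<bullet> w) * (J x w \<bullet> J x w)" by simp
    then show ?thesis using qw by (simp only: mult.assoc[symmetric] mult.commute[of "w \<bullet> w" q])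
  qed
qed

lemma E0:
  assumes "x \<bullet> w = 0" "x \<noteq> 0" "J x w = 0"
  shows "J w x = 0"
proof -
  have "(x \<bullet> x) * (J w x \<bullet> J w x) = 0" using N_gen[OF assms(1)] assms(3) by simp
  then show ?thesis using assms(2) by simp
qed

lemma E_eig:
  assumes o: "x \<bullet> w = 0" and n: "x \<bullet> x = w \<bullet> w" and e: "J x w = l *\<^sub>R w"
  shows "J w x = l *\<^sub>R x"
proof -
  have a: "J w x \<bullet> J w x = l * l * (w \<bullet> w)" using N_eq[OF o n] e by simp
  have b: "J w x \<bullet> x = l * (w \<bullet> w)" using K_sym[of x w] e by simp
  have c: "(J w x - l *\<^sub>R x) \<bullet> (J w x - l *\<^sub>R x) = J w x \<bullet> J w x - 2 * l * (J w x \<bullet> x) + l * l * (x \<bullet> x)"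
    by (simp add: inner_diff_left inner_diff_right inner_commute algebra_simps)
  have "(J w x - l *\<^sub>R x) \<bullet> (J w x - l *\<^sub>R x) = 0"
    unfolding c a b n by (simp add: algebra_simps)
  then show ?thesis by simp
qed

lemma cross:
  assumes "x \<bullet> z = 0" "x \<bullet> z' = 0" "J x z = l *\<^sub>R z" "J x z' = n *\<^sub>R z'" "l \<noteq> n"
  shows "J z z' = 0"
proof -
  have h1: "J x (J z z') = n *\<^sub>R J z z'"
    using jt_comm[OF assms(1), of z'] assms(4) by simp
  have "J x (Jp z z' z) = l *\<^sub>R Jp z z' z"
    using Jp_comm[OF assms(1) assms(2), of z] assms(3) by simp
  then have h2: "J x (J z z') = l *\<^sub>R J z z'" by (simp add: Jp_self1)
  from h1 h2 have "(l - n) *\<^sub>R J z z' = 0" by (simp add: algebra_simps)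
  then show ?thesis using assms(5) by simp
qed


lemma polar:
  assumes h: "\<And>y w. R x y y w = 0"
  shows "R x y z w = 0"
proof -
  have a: "R x b c d = - R x c b d" for b c d
  proof -
    have "R x (b + c) (b + c) d = 0" by (rule h)
    then have "R x b b d + R x b c d + (R x c b d + R x c c d) = 0" by simp
    then show ?thesis using h[of b d] h[of c d] by linarith
  qed
  have cyc: "R x b c d = R x c d b" for b c d
    using a[of b c d] R_anti2[of x c b d] by linarith
  have 1: "R y z x w = R x y z w"
    using R_pair[of y z x w] cyc[of w y z] cyc[of y z w] by linarith
  have 2: "R z x y w = R x y z w"
    using R_anti1[of z x y w] a[of y z w] by linarith
  show ?thesis using R_bianchi[of x y z w] 1 2 by linarith
qed

lemma Jzero_R:
  assumes xn: "x \<bullet> x = 1" and Jx0: "\<And>v. J x v = 0"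
  shows "R a b c d = 0"
proof -
  have xnz: "x \<noteq> 0" using xn by auto
  have Jx: "R v x x w = 0" for v w
    using Jx0[of v] J_inner[of x v w] by simp
  have s1: "R x y y w = 0" for y w
  proof -
    define t where "t = y \<bullet> x"
    define yp where "yp = y - t *\<^sub>R x"
    have o: "x \<bullet> yp = 0" unfolding yp_def t_def using xn by (simp add: inner_diff_right inner_commute)
    have "J yp x = 0" by (rule E0[OF o xnz Jx0])
    then have "R x yp yp w = 0" using J_inner[of yp x w] by simp
    moreover have "R x yp yp w = R x y y w - t * R x y x w"
      unfolding yp_def by (simp add: algebra_simps)
    moreover have "R x y x w = 0" using R_anti1[of x y x w] Jx[of y w] by simp
    ultimately show ?thesis by simp
  qed
  have s2: "R x b c d = 0" for b c d by (rule polar[OF s1])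
  have shift: "J (p + t *\<^sub>R x) v = J p v" for p t v
  proof (rule inner_ext)
    fix w
    have 1: "R v p x w = 0" using R_pair[of v p x w] s2 by simp
    have 2: "R v x p w = 0" using R_pair[of v x p w] R_anti2[of p w v x] R_pair[of p w x v] s2 by simp
    have "J (p + t *\<^sub>R x) v \<bullet> w = R v p p w + t * R v p x w + t * R v x p w + t * t * R v x x w"
      by (simp add: J_inner algebra_simps)
    also have "\<dots> = J p v \<bullet> w" using 1 2 Jx[of v w] by (simp add: J_inner)
    finally show "J (p + t *\<^sub>R x) v \<bullet> w = J p v \<bullet> w" .
  qed
  have comm: "J a' (J b' v) = J b' (J a' v)" for a' b' v
  proof -
    define s where "s = - (a' \<bullet> b') - (1 - a' \<bullet> x) * (x \<bullet> b')"
    have o: "(a' + (1 - a' \<bullet> x) *\<^sub>R x) \<bullet> (b' + s *\<^sub>R x) = 0"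
    proof -
      have "(a' + (1 - a' \<bullet> x) *\<^sub>R x) \<bullet> (b' + s *\<^sub>R x)
          = a' \<bullet> b' + s * (a' \<bullet> x) + (1 - a' \<bullet> x) * (x \<bullet> b') + (1 - a' \<bullet> x) * s * (x \<bullet> x)"
        by (simp add: inner_add_left inner_add_right algebra_simps)
      also have "\<dots> = 0" unfolding s_def xn by (simp add: algebra_simps)
      finally show ?thesis .
    qed
    have "J (a' + (1 - a' \<bullet> x) *\<^sub>R x) (J (b' + s *\<^sub>R x) v) = J (b' + s *\<^sub>R x) (J (a' + (1 - a' \<bullet> x) *\<^sub>R x) v)"
      by (rule jt_comm[OF o])
    then show ?thesis by (simp only: shift)
  qed
  have allz: "J u w = 0" for u w
  proof -
    have e: "J (u + w) u = - J u w + J w u" by (simp add: J_sumx Jp_self1)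
    have "J u (J (u + w) u) = 0" using comm[of u "u + w" u] by simp
    moreover have "J u (J w u) = 0" using comm[of u w u] by simp
    ultimately have "J u (J u w) = 0" unfolding e by simp
    then have "J u w \<bullet> J u w = 0" using J_sym[of u w "J u w"] by simp
    then show ?thesis by simp
  qed
  have "R a y y w = 0" for y w using allz[of y a] J_inner[of y a w] by simp
  then show ?thesis by (rule polar)
qed

end

lemma quad_zero:
  fixes a b :: real
  assumes h: "\<And>t. 2 * t * a \<le> t * t * b"
  shows "a = 0"
proof (rule ccontr)
  assume an: "a \<noteq> 0"
  define k where "k = \<bar>b\<bar> + 1"
  have kpos: "k > 0" unfolding k_def by simp
  define t where "t = a / k"
  have tk: "t * k = a" unfolding t_def using kpos by simp
  have "2 * t * a \<le> t * t * b" by (rule h)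
  then have "(2 * t * a) * (k * k) \<le> (t * t * b) * (k * k)"
    using kpos by (simp add: mult_right_mono)
  also have "(t * t * b) * (k * k) = (t * k) * (t * k) * b" by (simp add: algebra_simps)
  also have "(2 * t * a) * (k * k) = 2 * (t * k) * a * k" by (simp add: algebra_simps)
  finally have "2 * (a * a) * k \<le> (a * a) * b" unfolding tk by (simp add: algebra_simps)
  moreover have "a * a > 0" using an by (cases "a > 0") (auto simp: mult_pos_pos mult_neg_neg)
  ultimately have "2 * k \<le> b" by (metis mult_le_cancel_left_pos mult.assoc mult.commute)
  then show False unfolding k_def by (cases "b \<ge> 0") auto
qed

lemma eig_exists:
  fixes T :: "'a::euclidean_space \<Rightarrow> 'a"
  assumes lin: "linear T" and sym: "\<And>a b. T a \<bullet> b = a \<bullet> T b" and nz: "T u \<noteq> 0"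
  shows "\<exists>v l. v \<noteq> 0 \<and> l \<noteq> 0 \<and> T v = l *\<^sub>R v"
proof -
  define f where "f = (\<lambda>v. T v \<bullet> T v)"
  have bl: "bounded_linear T" using lin by (simp add: linear_conv_bounded_linear)
  have cT: "continuous_on (sphere 0 1) T" by (rule linear_continuous_on[OF bl])
  have cont: "continuous_on (sphere 0 1) f" unfolding f_def
    by (intro continuous_on_inner cT)
  have unz: "u \<noteq> 0" using nz linear_0[OF lin] by auto
  have "(1 / norm u) *\<^sub>R u \<in> sphere 0 1" using unz by simp
  then have ne: "sphere (0::'a) 1 \<noteq> {}" by blast
  obtain v where vS: "v \<in> sphere 0 1" and vmax: "\<And>y. y \<in> sphere 0 1 \<Longrightarrow> f y \<le> f v"
    using continuous_attains_sup[OF compact_sphere ne cont] by blast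
  have vn: "v \<bullet> v = 1" using vS by (simp add: norm_eq_1)
  define M where "M = f v"
  have fscale: "f (c *\<^sub>R p) = (c * c) * f p" for c p
    unfolding f_def using linear_scale[OF lin] by simp
  have sc: "f p \<le> M * (p \<bullet> p)" for p
  proof (cases "p = 0")
    case True
    then show ?thesis unfolding f_def M_def using linear_0[OF lin] by simp
  next
    case False
    define q where "q = (1 / norm p) *\<^sub>R p"
    have "q \<in> sphere 0 1" unfolding q_def using False by simp
    then have "f q \<le> M" unfolding M_def by (rule vmax)
    moreover have "f q = f p / (p \<bullet> p)" unfolding q_def fscale
      using False by (simp add: power2_norm_eq_inner[symmetric] power2_eq_square field_simps)
    moreover have "p \<bullet> p > 0" using False by simp
    ultimately show ?thesis by (simp add: field_simps)
  qed
  have Mpos: "M > 0"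
  proof -
    have "f u > 0" unfolding f_def using nz by simp
    moreover have "f u \<le> M * (u \<bullet> u)" by (rule sc)
    moreover have "u \<bullet> u > 0" using unz by simp
    ultimately show ?thesis by (metis less_le_trans zero_less_mult_pos2 less_imp_le not_le)
  qed
  have orth: "T v \<bullet> T w = 0" if wv: "w \<bullet> v = 0" for w
  proof (rule quad_zero)
    fix t :: real
    have 1: "f (v + t *\<^sub>R w) = M + 2 * t * (T v \<bullet> T w) + t * t * f w"
      unfolding f_def M_def using linear_add[OF lin] linear_scale[OF lin]
      by (simp add: inner_add_left inner_add_right inner_commute algebra_simps)
    have 2: "(v + t *\<^sub>R w) \<bullet> (v + t *\<^sub>R w) = 1 + t * t * (w \<bullet> w)"
      using vn wv by (simp add: inner_add_left inner_add_right inner_commute algebra_simps)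
    have "f (v + t *\<^sub>R w) \<le> M * ((v + t *\<^sub>R w) \<bullet> (v + t *\<^sub>R w))" by (rule sc)
    then have "M + 2 * t * (T v \<bullet> T w) + t * t * f w \<le> M * (1 + t * t * (w \<bullet> w))"
      unfolding 1 2 .
    then show "2 * t * (T v \<bullet> T w) \<le> t * t * (M * (w \<bullet> w) - f w)"
      by (simp add: algebra_simps)
  qed
  have eig2: "T (T v) = M *\<^sub>R v"
  proof -
    define w where "w = T (T v) - (T (T v) \<bullet> v) *\<^sub>R v"
    have wv: "w \<bullet> v = 0" unfolding w_def using vn by (simp add: inner_diff_left)
    have "T (T v) \<bullet> w = 0" using orth[OF wv] sym[of "T v" w] by simp
    then have "w \<bullet> w = 0" unfolding w_def using vn
      by (simp add: inner_diff_left inner_diff_right inner_commute w_def[symmetric] wv)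
    then have "w = 0" by simp
    moreover have "T (T v) \<bullet> v = M" unfolding M_def f_def using sym[of "T v" v] by (simp add: inner_commute)
    ultimately show ?thesis unfolding w_def by simp
  qed
  define r where "r = sqrt M"
  have rpos: "r > 0" unfolding r_def using Mpos by simp
  have rr: "r * r = M" unfolding r_def using Mpos by simp
  define a where "a = T v + r *\<^sub>R v"
  have Ta: "T a = r *\<^sub>R a"
    unfolding a_def using linear_add[OF lin] linear_scale[OF lin] eig2 rr
    by (simp add: algebra_simps)
  have vnz: "v \<noteq> 0" using vn by auto
  show ?thesis
  proof (cases "a = 0")
    case True
    then have "T v = (- r) *\<^sub>R v" unfolding a_def by (simp add: eq_neg_iff_add_eq_0)
    then show ?thesis using vnz rpos by (intro exI[of _ v] exI[of _ "- r"]) simp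
  next
    case False
    then show ?thesis using Ta rpos by (intro exI[of _ a] exI[of _ r]) simp
  qed
qed

context jt begin

lemma rank_kernel:
  assumes xn: "x \<bullet> x = 1" and rk: "jacobi_rank R x < DIM('a) - 1"
  shows "\<exists>y. y \<bullet> y = 1 \<and> x \<bullet> y = 0 \<and> J x y = 0"
proof (rule ccontr)
  assume no: "\<not> (\<exists>y. y \<bullet> y = 1 \<and> x \<bullet> y = 0 \<and> J x y = 0)"
  define H where "H = {v. x \<bullet> v = 0}"
  have xnz: "x \<noteq> 0" using xn by auto
  have inj: "inj_on (J x) H"
  proof (rule inj_onI)
    fix a b assume a: "a \<in> H" and b: "b \<in> H" and e: "J x a = J x b"
    show "a = b"
    proof (rule ccontr)
      assume "a \<noteq> b"
      then have dn: "a - b \<noteq> 0" by simp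
      define y where "y = (1 / norm (a - b)) *\<^sub>R (a - b)"
      have "y \<bullet> y = 1" unfolding y_def using dn
        by (simp add: power2_norm_eq_inner[symmetric] power2_eq_square)
      moreover have "x \<bullet> y = 0" unfolding y_def using a b H_def by (simp add: inner_diff_right)
      moreover have "J x y = 0" unfolding y_def using e by simp
      ultimately show False using no by blast
    qed
  qed
  have spanH: "span H = H" unfolding H_def using subspace_hyperplane by (simp add: span_eq_iff)
  have "dim (J x ` H) = dim H" using dim_image_eq[OF J_linear, where S=H] inj spanH by simp
  also have "dim H = DIM('a) - 1" unfolding H_def by (rule dim_hyperplane[OF xnz])
  finally have 1: "dim (J x ` H) = DIM('a) - 1" .
  have "dim (J x ` H) \<le> dim (range (J x))" by (rule dim_subset) auto
  then have "DIM('a) - 1 \<le> jacobi_rank R x" using 1 unfolding jacobi_rank_def by simp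
  then show False using rk by simp
qed

lemma mult_w:
  assumes xn: "x \<bullet> x = 1" and zn: "z \<bullet> z = 1" and z'n: "z' \<bullet> z' = 1"
    and o1: "x \<bullet> z = 0" and o2: "x \<bullet> z' = 0" and o3: "x \<bullet> y = 0"
    and o4: "z \<bullet> z' = 0" and o5: "z \<bullet> y = 0" and o6: "z' \<bullet> y = 0"
    and e1: "J x z = m *\<^sub>R z" and e2: "J x z' = m *\<^sub>R z'" and e3: "J x y = 0" and mnz: "m \<noteq> 0"
  shows "Jp z y z' = 0"
proof -
  have Jz'y: "J z' y = 0" using cross[OF o2 o3 e2, of 0] e3 mnz by simp
  define w where "w = Jp z y z'"
  have 1: "J x w = m *\<^sub>R w" unfolding w_def using Jp_comm[OF o1 o3, of z'] e2 by simp
  have z'z: "z' \<bullet> z = 0" using o4 by (simp add: inner_commute)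
  have 2: "J z' w = 0" unfolding w_def using Jp_comm[OF z'z o6, of z'] by simp
  have 3: "z' \<bullet> w = 0"
  proof -
    have a: "R z' z y z' = 0"
      using R_pair[of z' z y z'] J_inner[of z' y z] Jz'y by simp
    have b: "R z' y z z' = 0"
      using R_pair[of z' y z z'] J_inner[of z' z y] J_sym[of z' z y] Jz'y by simp
    have "w \<bullet> z' = 0" unfolding w_def using a b by (simp add: Jp_inner)
    then show ?thesis by (simp add: inner_commute)
  qed
  have 4: "J z' x = m *\<^sub>R x" using E_eig[OF o2 _ e2] xn z'n by simp
  have z'x: "z' \<bullet> x = 0" using o2 by (simp add: inner_commute)
  have 5: "J x w = 0" using cross[OF z'x 3 4, of 0] 2 mnz by simp
  from 1 5 have "m *\<^sub>R w = 0" by simp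
  then show ?thesis using mnz unfolding w_def by simp
qed

end


locale jt2 = jt R for R :: "'a::euclidean_space \<Rightarrow> 'a \<Rightarrow> 'a \<Rightarrow> 'a \<Rightarrow> real" +
  assumes Rnz: "R \<noteq> (\<lambda>x y z w. 0)"
    and rk: "\<forall>x. jacobi_rank R x < DIM('a) - 1"
begin

lemma J_nonzero:
  assumes xn: "x \<bullet> x = 1"
  shows "\<exists>u. J x u \<noteq> 0"
proof (rule ccontr)
  assume "\<not> (\<exists>u. J x u \<noteq> 0)"
  then have "\<And>v. J x v = 0" by blast
  then have "R a b c d = 0" for a b c d using Jzero_R[OF xn] by blast
  then have "R = (\<lambda>x y z w. 0)" by (intro ext) simp
  then show False using Rnz by simp
qed

lemma normalize:
  assumes "v \<noteq> 0"
  shows "((1 / norm v) *\<^sub>R v) \<bullet> ((1 / norm v) *\<^sub>R v) = 1"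
  using assms by (simp add: power2_norm_eq_inner[symmetric] power2_eq_square)

lemma rank1:
  assumes xn: "x \<bullet> x = 1"
  shows "\<exists>m p. p \<bullet> p = 1 \<and> m \<noteq> 0 \<and> (\<forall>v. J x v = (m * (v \<bullet> p)) *\<^sub>R p)"
proof -
  obtain u where "J x u \<noteq> 0" using J_nonzero[OF xn] by blast
  then obtain z0 m where z0: "z0 \<noteq> 0" and mnz: "m \<noteq> 0" and ez0: "J x z0 = m *\<^sub>R z0"
    using eig_exists[OF J_linear J_sym] by blast
  define z where "z = (1 / norm z0) *\<^sub>R z0"
  have zn: "z \<bullet> z = 1" unfolding z_def by (rule normalize[OF z0])
  have ez: "J x z = m *\<^sub>R z" unfolding z_def using ez0 by simp
  have xz: "x \<bullet> z = 0"
  proof -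
    have "m * (x \<bullet> z) = x \<bullet> J x z" using ez by simp
    then show ?thesis using mnz by simp
  qed
  obtain y where yn: "y \<bullet> y = 1" and xy: "x \<bullet> y = 0" and ey: "J x y = 0"
    using rank_kernel[OF xn] rk by blast
  have zy: "z \<bullet> y = 0"
  proof -
    have "m * (z \<bullet> y) = J x z \<bullet> y" using ez by simp
    also have "\<dots> = z \<bullet> J x y" by (rule J_sym)
    finally show ?thesis using ey mnz by simp
  qed
  define T where "T = (\<lambda>v. J x v - (m * (v \<bullet> z)) *\<^sub>R z)"
  have Tlin: "linear T" unfolding T_def
    by (rule linearI) (simp_all add: inner_add_left algebra_simps)
  have Tsym: "T a \<bullet> b = a \<bullet> T b" for a b
    unfolding T_def using J_sym[of x a b] by (simp add: inner_diff_left inner_diff_right inner_commute)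
  have T0: "T v = 0" for v
  proof (rule ccontr)
    assume "T v \<noteq> 0"
    then obtain z1 n where z1: "z1 \<noteq> 0" and nnz: "n \<noteq> 0" and ez1: "T z1 = n *\<^sub>R z1"
      using eig_exists[OF Tlin Tsym] by blast
    define z' where "z' = (1 / norm z1) *\<^sub>R z1"
    have z'n: "z' \<bullet> z' = 1" unfolding z'_def by (rule normalize[OF z1])
    have ez': "T z' = n *\<^sub>R z'" unfolding z'_def using ez1 linear_scale[OF Tlin] by simp
    have perp: "q \<bullet> z' = 0" if "T q = 0" for q
    proof -
      have "n * (q \<bullet> z') = q \<bullet> T z'" using ez' by simp
      also have "\<dots> = T q \<bullet> z'" by (rule Tsym[symmetric])
      finally show ?thesis using that nnz by simp
    qed
    have xz': "x \<bullet> z' = 0" by (rule perp) (simp add: T_def xz inner_commute)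
    have zz': "z \<bullet> z' = 0" by (rule perp) (simp add: T_def ez zn)
    have yz0: "y \<bullet> z = 0" using zy by (simp add: inner_commute)
    have yz': "y \<bullet> z' = 0" by (rule perp) (simp add: T_def ey yz0)
    have Jz': "J x z' = n *\<^sub>R z'"
      using ez' zz' unfolding T_def by (simp add: inner_commute)
    have ezx: "J z x = m *\<^sub>R x" using E_eig[OF xz _ ez] xn zn by simp
    have Jzz': "J z z' = 0"
    proof (cases "n = m")
      case False
      then show ?thesis using cross[OF xz xz' ez Jz'] by auto
    next
      case True
      have Jz'e: "J x z' = m *\<^sub>R z'" using Jz' True by simp
      have z'z: "z' \<bullet> z = 0" using zz' by (simp add: inner_commute)
      have z'y: "z' \<bullet> y = 0" using yz' by (simp add: inner_commute)
      have w1: "Jp z y z' = 0"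
        by (rule mult_w[OF xn zn z'n xz xz' xy zz' zy z'y ez Jz'e ey mnz])
      have w2: "Jp z' y z = 0"
        by (rule mult_w[OF xn z'n zn xz' xz xy z'z z'y zy Jz'e ez ey mnz])
      have Jyz': "J y z' = 0" using cross[OF xy xz', of 0 m] ey Jz'e mnz by simp
      have Jyz: "J y z = 0" using cross[OF xy xz, of 0 m] ey ez mnz by simp
      have Jz'y: "J z' y = 0" using cross[OF xz' xy Jz'e, of 0] ey mnz by simp
      have Jzy: "J z y = 0" using cross[OF xz xy ez, of 0] ey mnz by simp
      have yy: "(z + y) \<bullet> (z + y) = 2" using zn yn zy by (simp add: inner_add_left inner_add_right inner_commute)
      have yy': "(z' + y) \<bullet> (z' + y) = 2" using z'n yn z'y by (simp add: inner_add_left inner_add_right inner_commute)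
      have o1: "z' \<bullet> (z + y) = 0" using z'z z'y by (simp add: inner_add_right)
      have o2: "z \<bullet> (z' + y) = 0" using zz' zy by (simp add: inner_add_right)
      have a1: "J (z + y) z' = J z z'" using w1 Jyz' by (simp add: J_sumx)
      have a2: "J z' (z + y) = J z' z" using Jz'y by simp
      have b1: "J (z' + y) z = J z' z" using w2 Jyz by (simp add: J_sumx)
      have b2: "J z (z' + y) = J z z'" using Jzy by simp
      have "J z z' \<bullet> J z z' = 2 * (J z' z \<bullet> J z' z)"
        using N_gen[OF o1] z'n yy a1 a2 by simp
      moreover have "J z' z \<bullet> J z' z = 2 * (J z z' \<bullet> J z z')"
        using N_gen[OF o2] zn yy' b1 b2 by simp
      ultimately have "J z z' \<bullet> J z z' = 0" by linarith
      then show ?thesis by simp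
    qed
    have "J x z' = 0" using cross[OF _ zz' ezx, of 0] Jzz' mnz xz by (simp add: inner_commute)
    then show False using Jz' nnz z'n by auto
  qed
  show ?thesis
  proof (intro exI conjI allI)
    show "z \<bullet> z = 1" by (rule zn)
    show "m \<noteq> 0" by (rule mnz)
    fix v show "J x v = (m * (v \<bullet> z)) *\<^sub>R z" using T0[of v] unfolding T_def by simp
  qed
qed

end

context jt begin

definition rep :: "'a \<Rightarrow> real \<Rightarrow> 'a \<Rightarrow> bool" where
  "rep x m p \<longleftrightarrow> p \<bullet> p = 1 \<and> m \<noteq> 0 \<and> (\<forall>v. J x v = (m * (v \<bullet> p)) *\<^sub>R p)"

lemma rep_J: "rep x m p \<Longrightarrow> J x v = (m * (v \<bullet> p)) *\<^sub>R p"
  unfolding rep_def by blast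

lemma rep_eig: "rep x m p \<Longrightarrow> J x p = m *\<^sub>R p"
  unfolding rep_def by simp

lemma rep_perp: assumes "rep x m p" shows "x \<bullet> p = 0"
proof -
  have "x \<bullet> J x p = 0" by simp
  then have "m * (x \<bullet> p) = 0" using rep_eig[OF assms] by simp
  then show ?thesis using assms unfolding rep_def by simp
qed

lemma rep_sq: assumes "rep x m p" shows "J x v \<bullet> J x v = m * (J x v \<bullet> v)"
  using rep_J[OF assms, of v] assms unfolding rep_def by (simp add: inner_commute)

lemma lemM:
  assumes un: "u \<bullet> u = 1" and zn: "z \<bullet> z = 1" and uz: "u \<bullet> z = 0"
    and ru: "rep u mu pu" and rz: "rep z mz pz" and K: "J u z \<bullet> z \<noteq> 0"
  shows "mu = mz"
proof -
  have A: "J u z \<bullet> J u z = mu * (J u z \<bullet> z)" by (rule rep_sq[OF ru])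
  have B: "J z u \<bullet> J z u = mz * (J z u \<bullet> u)" by (rule rep_sq[OF rz])
  have N: "J z u \<bullet> J z u = J u z \<bullet> J u z" using N_eq[OF uz] un zn by simp
  have Ks: "J u z \<bullet> z = J z u \<bullet> u" by (rule K_sym)
  from A B N Ks have "mu * (J u z \<bullet> z) = mz * (J u z \<bullet> z)" by simp
  then show ?thesis using K by simp
qed

end

context jt2 begin

lemma ex_rep: "x \<bullet> x = 1 \<Longrightarrow> \<exists>m p. rep x m p"
  using rank1 unfolding rep_def by blast

lemma lemC:
  assumes pn: "p \<bullet> p = 1" and qn: "q \<bullet> q = 1" and pq: "p \<bullet> q = 0" and Jpq: "J p q = 0"
    and rp: "rep p mp f" and ueq: "u = c *\<^sub>R p + s *\<^sub>R q" and un: "u \<bullet> u = 1" and cnz: "c \<noteq> 0"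
    and ru: "rep u mu fu"
  shows "mu = mp"
proof -
  have fn: "f \<bullet> f = 1" and mpnz: "mp \<noteq> 0" using rp unfolding rep_def by auto
  have pf: "p \<bullet> f = 0" by (rule rep_perp[OF rp])
  have ef: "J p f = mp *\<^sub>R f" by (rule rep_eig[OF rp])
  have fq: "f \<bullet> q = 0"
  proof -
    have "mp * (f \<bullet> q) = J p f \<bullet> q" using ef by simp
    also have "\<dots> = f \<bullet> J p q" by (rule J_sym)
    finally show ?thesis using Jpq mpnz by simp
  qed
  have Jfp: "J f p = mp *\<^sub>R p" using E_eig[OF pf _ ef] pn fn by simp
  have Jfq: "J f q = 0" using cross[OF pf pq ef, of 0] Jpq mpnz by simp
  obtain m' f' where rf: "rep f m' f'" using ex_rep[OF fn] by blast
  have "mp = m'"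
  proof (rule lemM[OF pn fn pf rp rf])
    show "J p f \<bullet> f \<noteq> 0" using ef fn mpnz by simp
  qed
  moreover have "mu = m'"
  proof (rule lemM[OF un fn _ ru rf])
    have qf: "q \<bullet> f = 0" using fq by (simp add: inner_commute)
    show "u \<bullet> f = 0" unfolding ueq using pf qf by (simp add: inner_add_left)
    have "J u f \<bullet> f = J f u \<bullet> u" by (rule K_sym)
    also have "J f u = (c * mp) *\<^sub>R p" unfolding ueq using Jfp Jfq by simp
    also have "((c * mp) *\<^sub>R p) \<bullet> u = c * c * mp" unfolding ueq using pn pq
      by (simp add: inner_add_right algebra_simps)
    finally show "J u f \<bullet> f \<noteq> 0" using cnz mpnz by simp
  qed
  ultimately show ?thesis by simp
qed

lemma lemN:
  assumes pn: "p \<bullet> p = 1" and qn: "q \<bullet> q = 1" and pq: "p \<bullet> q = 0" and Jpq: "J p q = 0"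
    and rp: "rep p mp f" and rq: "rep q mq g"
  shows "mp = mq"
proof -
  define c where "c = 1 / sqrt 2"
  have s2: "sqrt 2 * sqrt 2 = (2::real)" by simp
  have cc: "c * c = 1 / 2" unfolding c_def using s2 by (metis divide_divide_eq_left mult_1 times_divide_eq_left)
  have cnz: "c \<noteq> 0" unfolding c_def by simp
  define u where "u = c *\<^sub>R p + c *\<^sub>R q"
  have un: "u \<bullet> u = 1" unfolding u_def using pn qn pq cc
    by (simp add: inner_add_left inner_add_right inner_commute algebra_simps)
  obtain mu fu where ru: "rep u mu fu" using ex_rep[OF un] by blast
  have qnz: "q \<noteq> 0" using qn by auto
  have qp: "q \<bullet> p = 0" using pq by (simp add: inner_commute)
  have pnz: "p \<noteq> 0" using pn by auto
  have Jqp: "J q p = 0" by (rule E0[OF pq pnz Jpq])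
  have "mu = mp" by (rule lemC[OF pn qn pq Jpq rp u_def un cnz ru])
  moreover have "mu = mq"
    by (rule lemC[OF qn pn qp Jqp rq _ un cnz ru, where s=c]) (simp add: u_def add.commute)
  ultimately show ?thesis by simp
qed

lemma const:
  assumes xn: "x \<bullet> x = 1" and wn: "w \<bullet> w = 1" and rx: "rep x mx f" and rw: "rep w mw g"
  shows "mx = mw"
proof -
  have fn: "f \<bullet> f = 1" and mxnz: "mx \<noteq> 0" using rx unfolding rep_def by auto
  have xf: "x \<bullet> f = 0" by (rule rep_perp[OF rx])
  have ef: "J x f = mx *\<^sub>R f" by (rule rep_eig[OF rx])
  obtain y where yn: "y \<bullet> y = 1" and xy: "x \<bullet> y = 0" and ey: "J x y = 0"
    using rank_kernel[OF xn] rk by blast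
  have yf: "y \<bullet> f = 0" using rep_J[OF rx, of y] ey fn mxnz by auto
  define wP where "wP = (w \<bullet> x) *\<^sub>R x + (w \<bullet> f) *\<^sub>R f"
  define wQ where "wQ = w - wP"
  have fx: "f \<bullet> x = 0" using xf by (simp add: inner_commute)
  have wQx: "wQ \<bullet> x = 0" unfolding wQ_def wP_def using xn fx
    by (simp add: inner_diff_left inner_add_left)
  have wQf: "wQ \<bullet> f = 0" unfolding wQ_def wP_def using fn xf
    by (simp add: inner_diff_left inner_add_left)
  define q where "q = (if wQ \<noteq> 0 then (1 / norm wQ) *\<^sub>R wQ else y)"
  have qn: "q \<bullet> q = 1" unfolding q_def using yn normalize by auto
  have qx: "q \<bullet> x = 0" unfolding q_def using wQx xy by (auto simp: inner_commute)
  have qf: "q \<bullet> f = 0" unfolding q_def using wQf yf by auto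
  have xq: "x \<bullet> q = 0" using qx by (simp add: inner_commute)
  have Jxq: "J x q = 0" using rep_J[OF rx, of q] qf by simp
  obtain mq gq where rq: "rep q mq gq" using ex_rep[OF qn] by blast
  have m1: "mx = mq" by (rule lemN[OF xn qn xq Jxq rx rq])
  have qnz: "q \<noteq> 0" using qn by auto
  have xnz: "x \<noteq> 0" using xn by auto
  have Jqx: "J q x = 0" by (rule E0[OF xq xnz Jxq])
  have Jqf: "J q f = 0" using cross[OF xq xf _ ef, of 0] Jxq mxnz by simp
  have wdec: "w = norm wP *\<^sub>R ((1 / norm wP) *\<^sub>R wP) + norm wQ *\<^sub>R q"
  proof -
    have "norm wP *\<^sub>R ((1 / norm wP) *\<^sub>R wP) = wP" by simp
    moreover have "norm wQ *\<^sub>R q = wQ" unfolding q_def by simp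
    ultimately show ?thesis unfolding wQ_def by simp
  qed
  show ?thesis
  proof (cases "wP = 0")
    case True
    then have wQw: "wQ = w" unfolding wQ_def by simp
    moreover have "norm w = 1" using wn by (simp add: norm_eq_1)
    ultimately have "q = w" unfolding q_def using wn by auto
    then have "mw = mq"
      using lemC[OF qn xn qx Jqx rq, of w 1 0 mw g] wn rw by simp
    then show ?thesis using m1 by simp
  next
    case False
    define p where "p = (1 / norm wP) *\<^sub>R wP"
    have pn: "p \<bullet> p = 1" unfolding p_def by (rule normalize[OF False])
    have Jqp: "J q p = 0" unfolding p_def wP_def using Jqx Jqf by simp
    have fq: "f \<bullet> q = 0" using qf by (simp add: inner_commute)
    have wPq: "wP \<bullet> q = 0" unfolding wP_def using xq fq by (simp add: inner_add_left)
    have pq: "p \<bullet> q = 0" unfolding p_def using wPq by simp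
    have qp: "q \<bullet> p = 0" using pq by (simp add: inner_commute)
    have Jpq: "J p q = 0" by (rule E0[OF qp qnz Jqp])
    obtain mp gp where rp: "rep p mp gp" using ex_rep[OF pn] by blast
    have m2: "mp = mq" by (rule lemN[OF pn qn pq Jpq rp rq])
    have "mw = mp"
    proof (rule lemC[OF pn qn pq Jpq rp _ wn _ rw, where c="norm wP" and s="norm wQ"])
      show "w = norm wP *\<^sub>R p + norm wQ *\<^sub>R q" unfolding p_def by (rule wdec)
      show "norm wP \<noteq> 0" using False by simp
    qed
    then show ?thesis using m1 m2 by simp
  qed
qed

lemma rank_one: assumes "rep x m p" shows "jacobi_rank R x = 1"
proof -
  have pn: "p \<bullet> p = 1" and mnz: "m \<noteq> 0" using assms unfolding rep_def by auto
  have pnz: "p \<noteq> 0" using pn by auto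
  have "range (J x) \<subseteq> span {p}"
    using rep_J[OF assms] by (auto intro: span_mul span_base)
  then have "dim (range (J x)) \<le> dim {p}" by (rule dim_mono)
  moreover have "{p} \<subseteq> range (J x)"
  proof -
    have "J x ((1 / m) *\<^sub>R p) = p" using rep_eig[OF assms] mnz by simp
    then show ?thesis by (metis empty_subsetI insert_subset rangeI)
  qed
  then have "dim {p} \<le> dim (range (J x))" by (rule dim_subset)
  ultimately show ?thesis unfolding jacobi_rank_def using pnz by simp
qed

lemma eigdim:
  assumes r: "rep x m p"
  shows "dim {v. J x v = c *\<^sub>R v} = (if c = 0 then DIM('a) - 1 else if c = m then 1 else 0)"
proof -
  have pn: "p \<bullet> p = 1" and mnz: "m \<noteq> 0" using r unfolding rep_def by auto
  have pnz: "p \<noteq> 0" using pn by auto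
  show ?thesis
  proof (cases "c = 0")
    case True
    have "{v. J x v = c *\<^sub>R v} = {v. p \<bullet> v = 0}"
      using rep_J[OF r] True mnz pnz by (auto simp: inner_commute)
    then show ?thesis using True dim_hyperplane[OF pnz] by simp
  next
    case cnz: False
    show ?thesis
    proof (cases "c = m")
      case True
      have sub1: "{v. J x v = c *\<^sub>R v} \<subseteq> span {p}"
      proof
        fix v assume "v \<in> {v. J x v = c *\<^sub>R v}"
        then have "(m * (v \<bullet> p)) *\<^sub>R p = m *\<^sub>R v" using rep_J[OF r, of v] True by simp
        then have "v = (v \<bullet> p) *\<^sub>R p" using mnz by (metis scaleR_scaleR scaleR_cancel_left)
        then show "v \<in> span {p}" by (metis span_base span_mul singletonI)
      qed
      have sub2: "{p} \<subseteq> {v. J x v = c *\<^sub>R v}" using rep_eig[OF r] True by simp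
      have "dim {v. J x v = c *\<^sub>R v} \<le> dim {p}" by (rule dim_mono[OF sub1])
      moreover have "dim {p} \<le> dim {v. J x v = c *\<^sub>R v}" by (rule dim_subset[OF sub2])
      ultimately show ?thesis using True cnz pnz by simp
    next
      case False
      have "{v. J x v = c *\<^sub>R v} = {0}"
      proof (intro set_eqI iffI)
        fix v assume "v \<in> {v. J x v = c *\<^sub>R v}"
        then have e: "(m * (v \<bullet> p)) *\<^sub>R p = c *\<^sub>R v" using rep_J[OF r, of v] by simp
        then have "((m * (v \<bullet> p)) *\<^sub>R p) \<bullet> p = (c *\<^sub>R v) \<bullet> p" by simp
        then have "m * (v \<bullet> p) = c * (v \<bullet> p)" using pn by simp
        then have "v \<bullet> p = 0" using False by simp
        then have "c *\<^sub>R v = 0" using e by simp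
        then show "v \<in> {0}" using cnz by simp
      qed simp
      then show ?thesis using cnz False by simp
    qed
  qed
qed

end


theorem lemma2p4:
  fixes R :: "'a::euclidean_space \<Rightarrow> 'a \<Rightarrow> 'a \<Rightarrow> 'a \<Rightarrow> real"
  assumes "DIM('a) \<ge> 3"
    and "alg_curv_tensor R"
    and "R \<noteq> (\<lambda>x y z w. 0)"
    and "jacobi_tsankov R"
    and "\<forall>x. jacobi_rank R x < DIM('a) - 1"
  shows "(\<forall>x\<in>unit_sphere. jacobi_rank R x = 1) \<and> osserman R"
proof -
  interpret jt2 R
  proof (intro jt2.intro jt.intro jt2_axioms.intro)
    show "alg_curv_tensor R" by (rule assms(2))
    show "jacobi_tsankov R" by (rule assms(4))
    show "R \<noteq> (\<lambda>x y z w. 0)" by (rule assms(3))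
    show "\<forall>x. jacobi_rank R x < DIM('a) - 1" by (rule assms(5))
  qed
  have 1: "\<forall>x\<in>unit_sphere. jacobi_rank R x = 1"
  proof
    fix x :: 'a assume "x \<in> unit_sphere"
    then have xn: "x \<bullet> x = 1" unfolding unit_sphere_def by simp
    obtain m p where "rep x m p" using ex_rep[OF xn] by blast
    then show "jacobi_rank R x = 1" by (rule rank_one)
  qed
  have 2: "osserman R"
    unfolding osserman_def
  proof (intro ballI allI)
    fix x y :: 'a and c :: real
    assume "x \<in> unit_sphere" "y \<in> unit_sphere"
    then have xn: "x \<bullet> x = 1" and yn: "y \<bullet> y = 1" unfolding unit_sphere_def by simp_all
    obtain mx px where rx: "rep x mx px" using ex_rep[OF xn] by blast
    obtain my py where ry: "rep y my py" using ex_rep[OF yn] by blast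
    have "mx = my" by (rule const[OF xn yn rx ry])
    then show "dim {v. jacobi_op R x v = c *\<^sub>R v} = dim {v. jacobi_op R y v = c *\<^sub>R v}"
      using eigdim[OF rx, of c] eigdim[OF ry, of c] by simp
  qed
  from 1 2 show ?thesis by blast
qed

end
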